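(* For every forward trie $\mathsf{T}_f$ with $n$ nodes, over any alphabet, the suffix array of $\mathsf{T}_f$ has size $O(n^2)$. Moreover, there exist forward tries $\mathsf{T}_f$ with $n$ nodes, for arbitrarily large $n$ and over an alphabet of constant size, whose suffix array has size $\Omega(n^2)$.
   Context: An alphabet $\Sigma$ is a finite ordered set of characters. A forward trie $\mathsf{T}_f$ is a rooted tree with $n$ nodes in which every edge is directed from parent to child and labeled by a single character of $\Sigma$, such that the edges leaving any node carry pairwise distinct labels. For nodes $u,v$ with $u$ an ancestor of $v$ (possibly $u=v$), $\mathrm{str}_f(u,v)$ is the string of labels read along the downward path from $u$ to $v$. Define $\mathrm{Suffix}(\mathsf{T}_f)=\{\mathrm{str}_f(u,\ell): \ell \text{ a leaf},\ u \text{ an ancestor of } \ell\}$. For a finite set $S$ of strings, its compact tree is obtained from the trie of all prefixes of strings in $S$ by deleting every non-root node that has exactly one child and merging its two incident edges into one edge labeled by the concatenation of their labels. The suffix tree $\mathsf{STree}(\mathsf{T}_f)$ is the compact tree of $\mathrm{Suffix}(\mathsf{T}_f)$. The suffix array of $\mathsf{T}_f$ is the array listing the leaves of $\mathsf{STree}(\mathsf{T}_f)$ in lexicographic order of the strings they spell; its size is the number of leaves of $\mathsf{STree}(\mathsf{T}_f)$. *)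

theory Defs
  imports Complex_Main
begin

text \<open>A forward trie over the alphabet \<Sigma>: finite node set V, root r, parent
  function par (par v is the parent of the non-root node v) and lab v is the label
  of the edge from par v to v.\<close>
definition forward_trie ::
  "'a set \<Rightarrow> 'v set \<Rightarrow> 'v \<Rightarrow> ('v \<Rightarrow> 'v) \<Rightarrow> ('v \<Rightarrow> 'a) \<Rightarrow> bool" where
  "forward_trie \<Sigma> V r par lab \<longleftrightarrow>
     finite \<Sigma> \<and> finite V \<and> r \<in> V \<and>
     (\<forall>v\<in>V. v \<noteq> r \<longrightarrow> par v \<in> V \<and> lab v \<in> \<Sigma>) \<and>
     (\<forall>v\<in>V. \<exists>k. (par ^^ k) v = r) \<and>
     (\<forall>v\<in>V. \<forall>w\<in>V. v \<noteq> r \<and> w \<noteq> r \<and> v \<noteq> w \<and> par v = par w \<longrightarrow> lab v \<noteq> lab w)"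

definition trie_leaves :: "'v set \<Rightarrow> 'v \<Rightarrow> ('v \<Rightarrow> 'v) \<Rightarrow> 'v set" where
  "trie_leaves V r par = {v \<in> V. \<not> (\<exists>w\<in>V. w \<noteq> r \<and> par w = v)}"

definition valid_up :: "'v \<Rightarrow> ('v \<Rightarrow> 'v) \<Rightarrow> nat \<Rightarrow> 'v \<Rightarrow> bool" where
  "valid_up r par k v \<longleftrightarrow> (\<forall>i<k. (par ^^ i) v \<noteq> r)"

text \<open>str_f((par^^k) v, v): labels read downward from the ancestor to v.\<close>
definition up_str :: "('v \<Rightarrow> 'v) \<Rightarrow> ('v \<Rightarrow> 'a) \<Rightarrow> nat \<Rightarrow> 'v \<Rightarrow> 'a list" where
  "up_str par lab k v = rev (map (\<lambda>i. lab ((par ^^ i) v)) [0..<k])"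

definition trie_Suffix :: "'v set \<Rightarrow> 'v \<Rightarrow> ('v \<Rightarrow> 'v) \<Rightarrow> ('v \<Rightarrow> 'a) \<Rightarrow> 'a list set" where
  "trie_Suffix V r par lab =
     {up_str par lab k l | k l. l \<in> trie_leaves V r par \<and> valid_up r par k l}"

text \<open>Compact tree of a finite string set S: the nodes of the trie of all prefixes
  are the prefix strings; the compact tree keeps the root and the nodes whose
  number of children is not 1. Its leaves are its nodes with no proper extension
  among its nodes.\<close>
definition Pref :: "'a list set \<Rightarrow> 'a list set" where
  "Pref S = {p. \<exists>s\<in>S. \<exists>t. p @ t = s}"

definition ctree_nodes :: "'a list set \<Rightarrow> 'a list set" where
  "ctree_nodes S = {p \<in> Pref S. p = [] \<or> card {c. p @ [c] \<in> Pref S} \<noteq> 1}"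

definition ctree_leaves :: "'a list set \<Rightarrow> 'a list set" where
  "ctree_leaves S = {p \<in> ctree_nodes S. \<not> (\<exists>q\<in>ctree_nodes S. \<exists>t. t \<noteq> [] \<and> q = p @ t)}"

text \<open>Size of the suffix array = number of leaves of STree(T_f).\<close>
definition suffix_array_size :: "'v set \<Rightarrow> 'v \<Rightarrow> ('v \<Rightarrow> 'v) \<Rightarrow> ('v \<Rightarrow> 'a) \<Rightarrow> nat" where
  "suffix_array_size V r par lab = card (ctree_leaves (trie_Suffix V r par lab))"

end

theory Submission
  imports Defs
begin

lemma Pref_finite: "finite S \<Longrightarrow> finite (Pref S)"
proof -
  assume f: "finite S"
  have "Pref S \<subseteq> (\<Union>s\<in>S. (\<lambda>k. take k s) ` {..length s})"
  proof
    fix p assume "p \<in> Pref S"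
    then obtain s t where "s \<in> S" "p @ t = s" unfolding Pref_def by blast
    then show "p \<in> (\<Union>s\<in>S. (\<lambda>k. take k s) ` {..length s})"
      by (auto intro!: bexI[of _ s] image_eqI[of _ _ "length p"])
  qed
  moreover have "finite (\<Union>s\<in>S. (\<lambda>k. take k s) ` {..length s})" using f by auto
  ultimately show ?thesis by (rule finite_subset)
qed

lemma leaves_sub: assumes "finite S" shows "ctree_leaves S \<subseteq> S"
proof
  fix p assume pl: "p \<in> ctree_leaves S"
  show "p \<in> S"
  proof (rule ccontr)
    assume "p \<notin> S"
    from pl have "p \<in> Pref S" unfolding ctree_leaves_def ctree_nodes_def by auto
    then obtain s t where s: "s \<in> S" "p @ t = s" unfolding Pref_def by blast
    with \<open>p \<notin> S\<close> have "t \<noteq> []" by auto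
    define E where "E = {q\<in>Pref S. \<exists>t. t \<noteq> [] \<and> q = p @ t}"
    have sE: "s \<in> E" using s \<open>t \<noteq> []\<close> unfolding E_def Pref_def by auto
    have fE: "finite E" using Pref_finite[OF assms] unfolding E_def by auto
    define M where "M = Max (length ` E)"
    have "M \<in> length ` E" unfolding M_def using fE sE by (intro Max_in) auto
    then obtain q where qE: "q \<in> E" and qM: "length q = M" by auto
    have big: "\<And>q'. q' \<in> E \<Longrightarrow> length q' \<le> M" unfolding M_def using fE by auto
    have nochild: "{c. q @ [c] \<in> Pref S} = {}"
    proof (rule ccontr)
      assume "{c. q @ [c] \<in> Pref S} \<noteq> {}"
      then obtain c where "q @ [c] \<in> Pref S" by auto
      moreover from qE obtain t' where "t' \<noteq> []" "q = p @ t'" unfolding E_def by auto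
      ultimately have "q @ [c] \<in> E" unfolding E_def by auto
      from big[OF this] qM show False by simp
    qed
    have "q \<in> ctree_nodes S" using qE nochild unfolding E_def ctree_nodes_def by auto
    moreover from qE obtain t' where "t' \<noteq> []" "q = p @ t'" unfolding E_def by auto
    ultimately show False using pl unfolding ctree_leaves_def by auto
  qed
qed

lemma depth_bound:
  assumes ft: "forward_trie \<Sigma> V r par lab" and lV: "l \<in> V" and vu: "valid_up r par k l"
  shows "k \<le> card V"
proof -
  from ft lV obtain k0 where k0: "(par ^^ k0) l = r" unfolding forward_trie_def by blast
  define k1 where "k1 = (LEAST k. (par ^^ k) l = r)"
  have k1r: "(par ^^ k1) l = r" unfolding k1_def using k0 by (rule LeastI)
  have nr: "\<And>i. i < k1 \<Longrightarrow> (par ^^ i) l \<noteq> r" unfolding k1_def using not_less_Least by blast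
  have "k \<le> k1"
  proof (rule ccontr)
    assume "\<not> k \<le> k1" then have "k1 < k" by simp
    with vu k1r show False unfolding valid_up_def by blast
  qed
  have inV: "\<And>i. i < k1 \<Longrightarrow> (par ^^ i) l \<in> V"
  proof -
    fix i show "i < k1 \<Longrightarrow> (par ^^ i) l \<in> V"
    proof (induction i)
      case 0 then show ?case using lV by simp
    next
      case (Suc i)
      then have a: "(par ^^ i) l \<in> V" "(par ^^ i) l \<noteq> r" using nr by auto
      then show ?case using ft unfolding forward_trie_def by auto
    qed
  qed
  have lt: False if "i < j" "j < k1" "(par ^^ i) l = (par ^^ j) l" for i j
  proof -
    have "(par ^^ (k1 - j + i)) l = (par ^^ (k1 - j)) ((par ^^ i) l)" by (simp add: funpow_add)
    also have "\<dots> = (par ^^ (k1 - j)) ((par ^^ j) l)" using that by simp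
    also have "\<dots> = (par ^^ (k1 - j + j)) l" by (simp add: funpow_add)
    also have "\<dots> = r" using that k1r by simp
    moreover have "k1 - j + i < k1" using that by simp
    ultimately show False using nr by blast
  qed
  have "inj_on (\<lambda>i. (par ^^ i) l) {..<k1}"
    unfolding inj_on_def
    by (metis lessThan_iff lt linorder_neqE_nat)
  moreover have "(\<lambda>i. (par ^^ i) l) ` {..<k1} \<subseteq> V" using inV by auto
  moreover have "finite V" using ft unfolding forward_trie_def by auto
  ultimately have "card {..<k1} \<le> card V" by (rule card_inj_on_le)
  then show ?thesis using \<open>k \<le> k1\<close> by simp
qed

lemma suffix_bound:
  assumes ft: "forward_trie \<Sigma> V r par lab"
  shows "finite (trie_Suffix V r par lab) \<and> card (trie_Suffix V r par lab) \<le> (card V + 1) * card V"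
proof -
  have fV: "finite V" using ft unfolding forward_trie_def by auto
  have sub: "trie_Suffix V r par lab \<subseteq> (\<lambda>(k,l). up_str par lab k l) ` ({..card V} \<times> V)"
  proof
    fix s assume "s \<in> trie_Suffix V r par lab"
    then obtain k l where s: "s = up_str par lab k l" "l \<in> trie_leaves V r par" "valid_up r par k l"
      unfolding trie_Suffix_def by blast
    then have "l \<in> V" unfolding trie_leaves_def by auto
    with s depth_bound[OF ft] have "k \<le> card V" by auto
    with s \<open>l \<in> V\<close> show "s \<in> (\<lambda>(k,l). up_str par lab k l) ` ({..card V} \<times> V)" by auto
  qed
  have fin: "finite ((\<lambda>(k,l). up_str par lab k l) ` ({..card V} \<times> V))" using fV by auto
  have "card (trie_Suffix V r par lab) \<le> card ((\<lambda>(k,l). up_str par lab k l) ` ({..card V} \<times> V))"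
    using sub fin by (simp add: card_mono)
  also have "\<dots> \<le> card ({..card V} \<times> V)" by (rule card_image_le) (use fV in auto)
  also have "\<dots> = (card V + 1) * card V" by (simp add: card_cartesian_product)
  finally show ?thesis using finite_subset[OF sub fin] by simp
qed

lemma part1: "\<exists>C::real. \<forall>(\<Sigma>::nat set) (V::nat set) r par (lab::nat \<Rightarrow> nat).
            forward_trie \<Sigma> V r par lab \<longrightarrow>
            real (suffix_array_size V r par lab) \<le> C * real (card V) ^ 2"
proof (intro exI[of _ 2] allI impI)
  fix \<Sigma> V r par and lab :: "nat \<Rightarrow> nat"
  assume ft: "forward_trie \<Sigma> V r par lab"
  have "card V \<ge> 1" using ft unfolding forward_trie_def
    by (metis One_nat_def Suc_leI card_gt_0_iff empty_iff)
  from suffix_bound[OF ft] have "suffix_array_size V r par lab \<le> (card V + 1) * card V"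
    unfolding suffix_array_size_def using leaves_sub card_mono
    by (meson le_trans)
  also have "\<dots> \<le> 2 * card V ^ 2" using \<open>card V \<ge> 1\<close> by (simp add: power2_eq_square)
  finally have "suffix_array_size V r par lab \<le> 2 * card V ^ 2" .
  then show "real (suffix_array_size V r par lab) \<le> 2 * real (card V) ^ 2"
    by (metis of_nat_le_iff of_nat_mult of_nat_numeral of_nat_power)
qed

definition cpar :: "nat \<Rightarrow> nat \<Rightarrow> nat" where
  "cpar m v = (if v \<le> 2*m then v - 1 else v - m)"
definition clab :: "nat \<Rightarrow> nat \<Rightarrow> nat" where
  "clab m v = (if v \<le> m then 0 else if v \<le> 2*m then 1 else 2)"

lemma L1: "v \<le> 2*m \<Longrightarrow> (cpar m ^^ i) v = v - i"
proof (induction i arbitrary: v)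
  case 0 then show ?case by simp
next
  case (Suc i)
  have c: "cpar m v \<le> 2*m" using Suc.prems by (simp add: cpar_def)
  have "(cpar m ^^ Suc i) v = (cpar m ^^ i) (cpar m v)" by (simp only: funpow_Suc_right o_apply)
  also have "\<dots> = cpar m v - i" by (rule Suc.IH[OF c])
  also have "\<dots> = v - Suc i" using Suc.prems by (simp add: cpar_def)
  finally show ?case .
qed

lemma L2: "v \<le> 3*m \<Longrightarrow> cpar m v \<le> 2*m"
  unfolding cpar_def by auto

lemma L3: "v \<le> 3*m \<Longrightarrow> 1 \<le> i \<Longrightarrow> (cpar m ^^ i) v \<le> 2*m"
proof -
  assume a: "v \<le> 3*m" "1 \<le> i"
  then obtain i' where i: "i = Suc i'" by (cases i) auto
  have "(cpar m ^^ i) v = (cpar m ^^ i') (cpar m v)" using i by (simp only: funpow_Suc_right o_apply)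
  also have "\<dots> = cpar m v - i'" using L1 L2 a by blast
  finally show ?thesis using L2[OF a(1)] by simp
qed

lemma L4: "1 \<le> j \<Longrightarrow> j \<le> m \<Longrightarrow> 1 \<le> x \<Longrightarrow> (cpar m ^^ x) (2*m+j) = m+j+1-x"
proof -
  assume a: "1 \<le> j" "j \<le> m" "1 \<le> x"
  then obtain x' where i: "x = Suc x'" by (cases x) auto
  have "(cpar m ^^ x) (2*m+j) = (cpar m ^^ x') (cpar m (2*m+j))" using i by (simp only: funpow_Suc_right o_apply)
  also have "cpar m (2*m+j) = m + j" using a by (simp add: cpar_def)
  also have "(cpar m ^^ x') (m+j) = m + j - x'" using L1 a by simp
  finally show ?thesis using i by simp
qed

definition cV :: "nat \<Rightarrow> nat set" where "cV m = {0..3*m}"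

lemma c_trie: "1 \<le> m \<Longrightarrow> forward_trie {0,1,2} (cV m) 0 (cpar m) (clab m)"
  unfolding forward_trie_def
proof (intro conjI ballI impI)
  assume m: "1 \<le> m"
  show "finite {0::nat,1,2}" by simp
  show "finite (cV m)" by (simp add: cV_def)
  show "0 \<in> cV m" by (simp add: cV_def)
  fix v assume v: "v \<in> cV m"
  { assume "v \<noteq> 0"
    show "cpar m v \<in> cV m" using v by (auto simp: cV_def cpar_def)
    show "clab m v \<in> {0,1,2}" by (simp add: clab_def) }
  show "\<exists>k. (cpar m ^^ k) v = 0"
  proof (cases "v \<le> 2*m")
    case True then show ?thesis using L1[OF True, of v] by auto
  next
    case False
    have "(cpar m ^^ Suc (v-m)) v = (cpar m ^^ (v-m)) (cpar m v)" by (simp only: funpow_Suc_right o_apply)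
    also have "cpar m v = v - m" using False by (simp add: cpar_def)
    also have "(cpar m ^^ (v-m)) (v-m) = 0" using L1[of "v-m" m "v-m"] v by (simp add: cV_def)
    finally show ?thesis by blast
  qed
  fix w assume w: "w \<in> cV m"
  assume "v \<noteq> 0 \<and> w \<noteq> 0 \<and> v \<noteq> w \<and> cpar m v = cpar m w"
  then show "clab m v \<noteq> clab m w" using v w by (auto simp: cV_def cpar_def clab_def split: if_splits)
qed

lemma c_leaf_gt:
  assumes m: "1 \<le> m" and l: "l \<in> trie_leaves (cV m) 0 (cpar m)"
  shows "2*m < l"
proof (rule ccontr)
  assume "\<not> 2*m < l"
  then have le: "l \<le> 2*m" by simp
  have nc: "\<And>w. w \<in> cV m \<Longrightarrow> w \<noteq> 0 \<Longrightarrow> cpar m w \<noteq> l"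
    using l unfolding trie_leaves_def by blast
  show False
  proof (cases "l < 2*m")
    case True
    have a: "l + 1 \<in> cV m" using True by (simp add: cV_def)
    have b: "cpar m (l+1) = l" using True by (simp add: cpar_def)
    show False using nc[OF a] b by simp
  next
    case False
    then have l2: "l = 2*m" using le by simp
    have a: "3*m \<in> cV m" by (simp add: cV_def)
    have c: "3*m \<noteq> 0" using m by simp
    have b: "cpar m (3*m) = l" using m l2 by (simp add: cpar_def)
    show False using nc[OF a c] b by simp
  qed
qed

lemma c_leaf: "1 \<le> j \<Longrightarrow> j \<le> m \<Longrightarrow> 2*m + j \<in> trie_leaves (cV m) 0 (cpar m)"
proof -
  assume a: "1 \<le> j" "j \<le> m"
  have "\<And>w. w \<in> cV m \<Longrightarrow> cpar m w \<noteq> 2*m + j"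
  proof -
    fix w assume "w \<in> cV m"
    then have "cpar m w \<le> 2*m" using L2 by (simp add: cV_def)
    then show "cpar m w \<noteq> 2*m + j" using a by simp
  qed
  moreover have "2*m + j \<in> cV m" using a by (simp add: cV_def)
  ultimately show ?thesis unfolding trie_leaves_def by blast
qed

lemma c_form:
  assumes m: "1 \<le> m" and s: "s \<in> trie_Suffix (cV m) 0 (cpar m) (clab m)"
  shows "s = [] \<or> (\<exists>w. s = w @ [2] \<and> 2 \<notin> set w)"
proof -
  obtain k l where s: "s = up_str (cpar m) (clab m) k l" "l \<in> trie_leaves (cV m) 0 (cpar m)"
    using s unfolding trie_Suffix_def by blast
  have l2: "2*m < l" using c_leaf_gt[OF m s(2)] .
  have l3: "l \<le> 3*m" using s(2) unfolding trie_leaves_def cV_def by auto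
  show ?thesis
  proof (cases k)
    case 0 then show ?thesis using s by (simp add: up_str_def)
  next
    case (Suc k')
    have "[0..<k] = 0 # [1..<k]" using Suc by (simp add: upt_conv_Cons)
    then have "s = rev (map (\<lambda>i. clab m ((cpar m ^^ i) l)) [1..<k]) @ [clab m l]"
      using s by (simp add: up_str_def)
    moreover have "clab m l = 2" using l2 by (simp add: clab_def)
    moreover have "2 \<notin> set (rev (map (\<lambda>i. clab m ((cpar m ^^ i) l)) [1..<k]))"
    proof
      assume "2 \<in> set (rev (map (\<lambda>i. clab m ((cpar m ^^ i) l)) [1..<k]))"
      then obtain x where x: "1 \<le> x" "clab m ((cpar m ^^ x) l) = 2" by auto
      have "(cpar m ^^ x) l \<le> 2*m" using L3[OF l3 x(1)] .
      then show False using x(2) by (simp add: clab_def split: if_splits)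
    qed
    ultimately show ?thesis by auto
  qed
qed

lemma c_max:
  assumes m: "1 \<le> m" and t: "t \<noteq> []" "last t = 2"
    and tu: "t @ u \<in> trie_Suffix (cV m) 0 (cpar m) (clab m)" and u: "u \<noteq> []"
  shows False
proof -
  from c_form[OF m tu] t obtain w where w: "t @ u = w @ [2]" "2 \<notin> set w" by auto
  have "butlast (t @ u) = t @ butlast u" using u by (simp add: butlast_append)
  then have "w = t @ butlast u" using w by simp
  moreover have "2 \<in> set t" using t by (metis last_in_set)
  ultimately show False using w by simp
qed

lemma c_up:
  assumes "1 \<le> j" "j \<le> m" "i \<le> m"
  shows "up_str (cpar m) (clab m) (i+j+1) (2*m+j) = replicate i 0 @ replicate j 1 @ [2]"
proof (rule nth_equalityI)
  show "length (up_str (cpar m) (clab m) (i+j+1) (2*m+j)) = length (replicate i 0 @ replicate j 1 @ [2::nat])"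
    by (simp add: up_str_def)
  fix p assume "p < length (up_str (cpar m) (clab m) (i+j+1) (2*m+j))"
  then have p: "p < i+j+1" by (simp add: up_str_def)
  have lhs: "up_str (cpar m) (clab m) (i+j+1) (2*m+j) ! p = clab m ((cpar m ^^ (i+j-p)) (2*m+j))"
    using p unfolding up_str_def by (simp add: rev_nth del: upt_Suc)
  show "up_str (cpar m) (clab m) (i+j+1) (2*m+j) ! p = (replicate i 0 @ replicate j 1 @ [2]) ! p"
  proof (cases "p = i+j")
    case True then show ?thesis using lhs assms by (simp add: clab_def nth_append)
  next
    case False
    then have "(cpar m ^^ (i+j-p)) (2*m+j) = m+j+1-(i+j-p)" using L4 assms p by simp
    then show ?thesis using lhs assms p False by (auto simp: clab_def nth_append)
  qed
qed

lemma c_in: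
  assumes m: "1 \<le> j" "j \<le> m" "i \<le> m"
  shows "replicate i 0 @ replicate j 1 @ [2] \<in> trie_Suffix (cV m) 0 (cpar m) (clab m)"
proof -
  have "valid_up 0 (cpar m) (i+j+1) (2*m+j)"
    unfolding valid_up_def
  proof (intro allI impI)
    fix x assume x: "x < i+j+1"
    show "(cpar m ^^ x) (2*m+j) \<noteq> 0"
    proof (cases "x = 0")
      case True then show ?thesis using assms by simp
    next
      case False then show ?thesis using L4[of j m x] assms x by simp
    qed
  qed
  then show ?thesis unfolding trie_Suffix_def using c_up[OF assms] c_leaf[OF m(1,2)]
    by (metis (mono_tags, lifting) mem_Collect_eq)
qed

lemma c_size:
  assumes m: "1 \<le> m"
  shows "(m+1)*m \<le> suffix_array_size (cV m) 0 (cpar m) (clab m)"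
proof -
  define S where "S = trie_Suffix (cV m) 0 (cpar m) (clab m)"
  define f where "f = (\<lambda>(i::nat,j::nat). replicate i (0::nat) @ replicate j 1 @ [2])"
  have inj: "inj_on f ({..m} \<times> {1..m})"
  proof (rule inj_onI)
    fix a b assume "a \<in> {..m} \<times> {1..m}" "b \<in> {..m} \<times> {1..m}" "f a = f b"
    then obtain i j i' j' where ab: "a = (i,j)" "b = (i',j')" and e: "f (i,j) = f (i',j')" by auto
    have "length (filter (\<lambda>x. x = 0) (f (i,j))) = length (filter (\<lambda>x. x = 0) (f (i',j')))"
      "length (filter (\<lambda>x. x = 1) (f (i,j))) = length (filter (\<lambda>x. x = 1) (f (i',j')))"
      using e by simp_all
    then show "a = b" using ab by (simp add: f_def filter_replicate)
  qed
  have sub: "f ` ({..m} \<times> {1..m}) \<subseteq> ctree_leaves S"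
  proof
    fix t assume "t \<in> f ` ({..m} \<times> {1..m})"
    then obtain i j where ij: "i \<le> m" "1 \<le> j" "j \<le> m" "t = f (i,j)" by auto
    have tS: "t \<in> S" using c_in[of j m i] ij unfolding S_def f_def by simp
    have tl: "t \<noteq> []" "last t = 2" using ij by (auto simp: f_def)
    have noext: "\<And>u. u \<noteq> [] \<Longrightarrow> t @ u \<in> Pref S \<Longrightarrow> False"
    proof -
      fix u assume u: "u \<noteq> []" "t @ u \<in> Pref S"
      then obtain v where "t @ u @ v \<in> S" unfolding Pref_def by auto
      then show False using c_max[OF m tl, of "u @ v"] u unfolding S_def by simp
    qed
    have tP: "t \<in> Pref S" using tS unfolding Pref_def by force
    have "{c. t @ [c] \<in> Pref S} = {}" using noext by auto
    then have tN: "t \<in> ctree_nodes S" using tP unfolding ctree_nodes_def by simp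
    show "t \<in> ctree_leaves S" unfolding ctree_leaves_def
      using tN noext unfolding ctree_nodes_def by auto
  qed
  have fin: "finite (ctree_leaves S)"
    using suffix_bound[OF c_trie[OF m]] leaves_sub finite_subset unfolding S_def by blast
  have "card (f ` ({..m} \<times> {1..m})) = (m+1)*m" using card_image[OF inj] by (simp add: card_cartesian_product)
  moreover have "card (f ` ({..m} \<times> {1..m})) \<le> card (ctree_leaves S)" using card_mono[OF fin sub] .
  ultimately show ?thesis unfolding suffix_array_size_def S_def by simp
qed

lemma part2: "\<exists>c::real. c > 0 \<and> (\<exists>\<sigma>::nat. \<forall>N::nat. \<exists>(\<Sigma>::nat set) (V::nat set) r par (lab::nat \<Rightarrow> nat).
            forward_trie \<Sigma> V r par lab \<and> card \<Sigma> \<le> \<sigma> \<and> card V \<ge> N \<and>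
            real (suffix_array_size V r par lab) \<ge> c * real (card V) ^ 2)"
proof (intro exI[of _ "1/16"] conjI exI[of _ 3] allI)
  show "(0::real) < 1/16" by simp
  fix N :: nat
  define m where "m = N + 1"
  have m: "1 \<le> m" unfolding m_def by simp
  have cV: "card (cV m) = 3*m+1" by (simp add: cV_def)
  have sz: "(m+1)*m \<le> suffix_array_size (cV m) 0 (cpar m) (clab m)" by (rule c_size[OF m])
  have "real ((3*m+1)^2) \<le> real (16*((m+1)*m))" using m
    by (simp only: of_nat_le_iff) (simp add: power2_eq_square algebra_simps)
  then have "(1/16) * real (card (cV m)) ^ 2 \<le> real ((m+1)*m)" unfolding cV by simp
  also have "\<dots> \<le> real (suffix_array_size (cV m) 0 (cpar m) (clab m))" using sz of_nat_le_iff by blast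
  finally have A: "1/16 * real (card (cV m)) ^ 2 \<le> real (suffix_array_size (cV m) 0 (cpar m) (clab m))" .
  show "\<exists>(\<Sigma>::nat set) (V::nat set) r par (lab::nat \<Rightarrow> nat).
            forward_trie \<Sigma> V r par lab \<and> card \<Sigma> \<le> 3 \<and> card V \<ge> N \<and>
            real (suffix_array_size V r par lab) \<ge> 1/16 * real (card V) ^ 2"
    apply (rule exI[of _ "{0,1,2}"], rule exI[of _ "cV m"], rule exI[of _ 0], rule exI[of _ "cpar m"], rule exI[of _ "clab m"])
    using c_trie[OF m] A cV m_def by simp
qed

theorem corollary1:
  shows "(\<exists>C::real. \<forall>(\<Sigma>::nat set) (V::nat set) r par (lab::nat \<Rightarrow> nat).
            forward_trie \<Sigma> V r par lab \<longrightarrow>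
            real (suffix_array_size V r par lab) \<le> C * real (card V) ^ 2)
       \<and> (\<exists>c::real. c > 0 \<and> (\<exists>\<sigma>::nat. \<forall>N::nat. \<exists>(\<Sigma>::nat set) (V::nat set) r par (lab::nat \<Rightarrow> nat).
            forward_trie \<Sigma> V r par lab \<and> card \<Sigma> \<le> \<sigma> \<and> card V \<ge> N \<and>
            real (suffix_array_size V r par lab) \<ge> c * real (card V) ^ 2))"
  using part1 part2 by blast

end
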